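(* Let $R$ be a rod set and $\mathsf T$ an expansion subtree of $\mathrm{Tree}(R)$. Let $Q=\langle\mathrm{Inner}(\mathsf T)\rangle$ and $S=\langle\mathrm{Leaves}(\mathsf T)\rangle$. Then for every $n>0$, $$D(n,R,S)=C(n,Q).$$
   Context: A rod is a triple $(r,c,\varepsilon)$ with $r$ a positive integer (length), $c$ a tag (color) and $\varepsilon\in\{\pm1\}$ (sign); rods of sign $-1$ are antirods. A rod set is a set of rods with finitely many rods of each length. A train built from $R$ is a finite sequence of rods of $R$ (including the empty train $\Lambda$); its length is the sum of lengths and its sign the product of signs. For a set $X$ of trains, $\langle X\rangle$ is the rod set containing, for each nonempty train $\tau\in X$, one rod whose length and sign are those of $\tau$. $C(n,R)$ is the number of positive rods of length $n$ in $R$ minus the number of antirods of length $n$. $F(n,R)$ is the number of positive trains of length $n$ built from $R$ minus the number of negative ones, with $F(0,R)=1$ and $F(n,R)=0$ for $n<0$. The discrepancy is $D(n,R,S)=F(n,R)-\sum_{k\in S}(\operatorname{sign}k)F(n-\operatorname{len}(k),R)$. $\mathrm{Tree}(R)$ is the rooted tree with nodes the trains built from $R$, root $\Lambda$, and children of $\tau$ the trains $\tau k$, $k\in R$ (one per rod of $R$). An expansion subtree $\mathsf T$ is a rooted subtree containing all children of the root, and containing all children of any node of which it contains at least one child. $\mathrm{Inner}(\mathsf T)$ is the set of non-root nodes with children in $\mathsf T$; $\mathrm{Leaves}(\mathsf T)$ the set of nodes of $\mathsf T$ with no children in $\mathsf T$. *)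

theory Defs
  imports Main
begin

type_synonym 'c rod = "nat \<times> 'c \<times> int"

definition rlen :: "'c rod \<Rightarrow> nat" where "rlen k = fst k"
definition rcol :: "'c rod \<Rightarrow> 'c" where "rcol k = fst (snd k)"
definition rsgn :: "'c rod \<Rightarrow> int" where "rsgn k = snd (snd k)"

definition rod_set :: "'c rod set \<Rightarrow> bool" where
  "rod_set R \<longleftrightarrow> (\<forall>k\<in>R. rlen k > 0 \<and> (rsgn k = 1 \<or> rsgn k = -1))
                  \<and> (\<forall>n. finite {k\<in>R. rlen k = n})"

definition train_len :: "'c rod list \<Rightarrow> nat" where
  "train_len \<tau> = sum_list (map rlen \<tau>)"
definition train_sign :: "'c rod list \<Rightarrow> int" where
  "train_sign \<tau> = prod_list (map rsgn \<tau>)"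

definition trains :: "'c rod set \<Rightarrow> 'c rod list set" where
  "trains R = {\<tau>. set \<tau> \<subseteq> R}"

definition rods_of :: "'c rod list set \<Rightarrow> ('c rod list) rod set" where
  "rods_of X = {(train_len \<tau>, \<tau>, train_sign \<tau>) | \<tau>. \<tau> \<in> X \<and> \<tau> \<noteq> []}"

definition Ccount :: "nat \<Rightarrow> 'c rod set \<Rightarrow> int" where
  "Ccount n R = int (card {k\<in>R. rlen k = n \<and> rsgn k = 1})
              - int (card {k\<in>R. rlen k = n \<and> rsgn k = -1})"

definition Fcount :: "int \<Rightarrow> 'c rod set \<Rightarrow> int" where
  "Fcount n R = (if n < 0 then 0 else if n = 0 then 1 else
     (\<Sum>\<tau>\<in>{\<tau>\<in>trains R. int (train_len \<tau>) = n}. train_sign \<tau>))"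

text \<open>Discrepancy; terms with len k > n vanish since F is 0 at negative arguments.\<close>
definition Disc :: "int \<Rightarrow> 'c rod set \<Rightarrow> 'd rod set \<Rightarrow> int" where
  "Disc n R S = Fcount n R
     - (\<Sum>k\<in>{k\<in>S. int (rlen k) \<le> n}. rsgn k * Fcount (n - int (rlen k)) R)"

definition expansion_subtree :: "'c rod set \<Rightarrow> 'c rod list set \<Rightarrow> bool" where
  "expansion_subtree R T \<longleftrightarrow>
     T \<subseteq> trains R \<and> [] \<in> T
     \<and> (\<forall>\<tau> k. \<tau> @ [k] \<in> T \<longrightarrow> \<tau> \<in> T)
     \<and> (\<forall>k\<in>R. [k] \<in> T)
     \<and> (\<forall>\<tau>. (\<exists>k\<in>R. \<tau> @ [k] \<in> T) \<longrightarrow> (\<forall>k\<in>R. \<tau> @ [k] \<in> T))"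

definition Inner :: "'c rod set \<Rightarrow> 'c rod list set \<Rightarrow> 'c rod list set" where
  "Inner R T = {\<tau>\<in>T. \<tau> \<noteq> [] \<and> (\<exists>k\<in>R. \<tau> @ [k] \<in> T)}"

definition Leaves :: "'c rod set \<Rightarrow> 'c rod list set \<Rightarrow> 'c rod list set" where
  "Leaves R T = {\<tau>\<in>T. \<not> (\<exists>k\<in>R. \<tau> @ [k] \<in> T)}"

end

theory Submission
  imports Defs
begin

lemma tl_append[simp]: "train_len (a @ b) = train_len a + train_len b"
  by (simp add: train_len_def)
lemma ts_append[simp]: "train_sign (a @ b) = train_sign a * train_sign b"
  by (simp add: train_sign_def)
lemma tl_Nil[simp]: "train_len [] = 0" by (simp add: train_len_def)
lemma ts_Nil[simp]: "train_sign [] = 1" by (simp add: train_sign_def)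
lemma tl_Cons[simp]: "train_len (x#b) = rlen x + train_len b" by (simp add: train_len_def)
lemma ts_Cons[simp]: "train_sign (x#b) = rsgn x * train_sign b" by (simp add: train_sign_def)

lemma trains_append[simp]: "a @ b \<in> trains R \<longleftrightarrow> a \<in> trains R \<and> b \<in> trains R"
  by (auto simp: trains_def)
lemma trains_Nil[simp]: "[] \<in> trains R" by (simp add: trains_def)
lemma trains_Cons[simp]: "x # b \<in> trains R \<longleftrightarrow> x \<in> R \<and> b \<in> trains R" by (auto simp: trains_def)

lemma len_ge_length: "rod_set R \<Longrightarrow> \<tau> \<in> trains R \<Longrightarrow> length \<tau> \<le> train_len \<tau>"
  by (induction \<tau>) (auto simp: rod_set_def Suc_le_eq)

lemma sign_pm: "rod_set R \<Longrightarrow> \<tau> \<in> trains R \<Longrightarrow> train_sign \<tau> = 1 \<or> train_sign \<tau> = -1"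
  by (induction \<tau>) (auto simp: rod_set_def)

definition TR :: "'c rod set \<Rightarrow> nat \<Rightarrow> 'c rod list set" where
  "TR R m = {\<tau> \<in> trains R. train_len \<tau> = m}"

lemma elem_le: "x \<in> set \<tau> \<Longrightarrow> rlen x \<le> train_len \<tau>"
  by (induction \<tau>) auto

lemma finite_TR: assumes "rod_set R" shows "finite (TR R m)"
proof -
  have fin: "finite {k\<in>R. rlen k \<le> m}"
  proof -
    have "{k\<in>R. rlen k \<le> m} = (\<Union>i\<le>m. {k\<in>R. rlen k = i})" by auto
    thus ?thesis using assms by (simp add: rod_set_def)
  qed
  have "TR R m \<subseteq> {xs. set xs \<subseteq> {k\<in>R. rlen k \<le> m} \<and> length xs \<le> m}"
    using len_ge_length[OF assms] elem_le by (fastforce simp: TR_def trains_def)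
  thus ?thesis using finite_lists_length_le[OF fin] finite_subset by blast
qed

lemma Fcount_TR: assumes "rod_set R" shows "Fcount (int m) R = (\<Sum>\<tau>\<in>TR R m. train_sign \<tau>)"
proof (cases "m = 0")
  case True
  have "TR R 0 = {[]}"
  proof -
    have "\<tau> \<in> trains R \<Longrightarrow> train_len \<tau> = 0 \<Longrightarrow> \<tau> = []" for \<tau>
      using len_ge_length[OF assms] by fastforce
    thus ?thesis by (auto simp: TR_def)
  qed
  thus ?thesis using True by (simp add: Fcount_def)
next
  case False
  thus ?thesis by (simp add: Fcount_def TR_def)
qed

lemma prefix_closed: assumes "expansion_subtree R T" shows "\<tau> @ r \<in> T \<Longrightarrow> \<tau> \<in> T"
proof (induction r rule: rev_induct)
  case Nil thus ?case by simp
next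
  case (snoc x r)
  then have "(\<tau> @ r) @ [x] \<in> T" by simp
  then have "\<tau> @ r \<in> T" using assms unfolding expansion_subtree_def by blast
  thus ?case using snoc.IH by simp
qed

lemma T_trains: "expansion_subtree R T \<Longrightarrow> \<tau> \<in> T \<Longrightarrow> \<tau> \<in> trains R"
  by (auto simp: expansion_subtree_def)

lemma cover: assumes "expansion_subtree R T"
  shows "\<sigma> \<in> trains R \<Longrightarrow> \<sigma> \<noteq> [] \<Longrightarrow> \<sigma> \<in> T \<or> (\<exists>l \<rho>. l \<in> Leaves R T \<and> l \<noteq> [] \<and> \<sigma> = l @ \<rho>)"
proof (induction \<sigma> rule: rev_induct)
  case Nil thus ?case by simp
next
  case (snoc x \<sigma>')
  have xR: "x \<in> R" "\<sigma>' \<in> trains R" using snoc.prems by auto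
  show ?case
  proof (cases "\<sigma>' = []")
    case True thus ?thesis using assms xR by (simp add: expansion_subtree_def)
  next
    case False
    with snoc.IH xR have "\<sigma>' \<in> T \<or> (\<exists>l \<rho>. l \<in> Leaves R T \<and> l \<noteq> [] \<and> \<sigma>' = l @ \<rho>)" by blast
    thus ?thesis
    proof
      assume inT: "\<sigma>' \<in> T"
      show ?thesis
      proof (cases "\<exists>k\<in>R. \<sigma>' @ [k] \<in> T")
        case True
        then have "\<sigma>' @ [x] \<in> T" using assms xR unfolding expansion_subtree_def by blast
        thus ?thesis by simp
      next
        case False
        then have "\<sigma>' \<in> Leaves R T" using inT by (simp add: Leaves_def)
        thus ?thesis using \<open>\<sigma>' \<noteq> []\<close> by blast
      qed
    next
      assume "\<exists>l \<rho>. l \<in> Leaves R T \<and> l \<noteq> [] \<and> \<sigma>' = l @ \<rho>"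
      then obtain l \<rho> where "l \<in> Leaves R T" "l \<noteq> []" "\<sigma>' = l @ \<rho>" by blast
      thus ?thesis by (metis append.assoc)
    qed
  qed
qed

lemma leaf_ext: assumes "expansion_subtree R T" "l \<in> Leaves R T" "l @ r \<in> T" shows "r = []"
proof (cases r)
  case (Cons k r')
  have "(l @ [k]) @ r' \<in> T" using assms(3) Cons by simp
  hence "l @ [k] \<in> T" using prefix_closed[OF assms(1)] by blast
  moreover have "k \<in> R" using T_trains[OF assms(1) assms(3)] Cons by simp
  ultimately show ?thesis using assms(2) by (auto simp: Leaves_def)
qed simp

definition hr :: "'c rod list \<Rightarrow> ('c rod list) rod" where
  "hr \<tau> = (train_len \<tau>, \<tau>, train_sign \<tau>)"

lemma rods_of_filter: "{k\<in>rods_of X. P (rlen k)} = hr ` {\<tau>\<in>X. \<tau> \<noteq> [] \<and> P (train_len \<tau>)}"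
  by (auto simp: rods_of_def rlen_def hr_def)

lemma inj_hr: "inj_on hr A" by (auto simp: inj_on_def hr_def)

lemma Ccount_sum: assumes "finite Y" "Y = {k\<in>X. rlen k = N}" "\<forall>k\<in>Y. rsgn k = 1 \<or> rsgn k = -1"
  shows "Ccount N X = (\<Sum>k\<in>Y. rsgn k)"
proof -
  have e: "Y = {k\<in>Y. rsgn k = 1} \<union> {k\<in>Y. rsgn k = -1}" using assms(3) by auto
  have "(\<Sum>k\<in>Y. rsgn k) = (\<Sum>k\<in>{k\<in>Y. rsgn k = 1} \<union> {k\<in>Y. rsgn k = -1}. rsgn k)"
    using e by simp
  also have "\<dots> = (\<Sum>k\<in>{k\<in>Y. rsgn k = 1}. rsgn k) + (\<Sum>k\<in>{k\<in>Y. rsgn k = -1}. rsgn k)"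
    by (rule sum.union_disjoint) (use assms(1) in auto)
  also have "(\<Sum>k\<in>{k\<in>Y. rsgn k = 1}. rsgn k) = (\<Sum>k\<in>{k\<in>Y. rsgn k = 1}. 1)"
    by (rule sum.cong) auto
  also have "(\<Sum>k\<in>{k\<in>Y. rsgn k = -1}. rsgn k) = (\<Sum>k\<in>{k\<in>Y. rsgn k = -1}. -1)"
    by (rule sum.cong) auto
  finally have "(\<Sum>k\<in>Y. rsgn k) = int (card {k\<in>Y. rsgn k = 1}) - int (card {k\<in>Y. rsgn k = -1})"
    by simp
  moreover have "{k\<in>Y. rsgn k = 1} = {k\<in>X. rlen k = N \<and> rsgn k = 1}"
    "{k\<in>Y. rsgn k = -1} = {k\<in>X. rlen k = N \<and> rsgn k = -1}" using assms(2) by auto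
  ultimately show ?thesis by (simp add: Ccount_def)
qed

theorem mainTheorem4:
  fixes R :: "'c rod set" and T :: "'c rod list set" and n :: int
  assumes "rod_set R" and "expansion_subtree R T" and "n > 0"
  shows "Disc n R (rods_of (Leaves R T)) = Ccount (nat n) (rods_of (Inner R T))"
proof -
  note rs = assms(1) and ex = assms(2)
  define N where "N = nat n"
  have nN: "n = int N" "N > 0" using assms(3) by (auto simp: N_def)
  define A where "A = {\<tau>\<in>Inner R T. \<tau> \<noteq> [] \<and> train_len \<tau> = N}"
  define L where "L = {l\<in>Leaves R T. l \<noteq> [] \<and> int (train_len l) \<le> n}"
  define B where "B l = (\<lambda>\<rho>. l @ \<rho>) ` TR R (N - train_len l)" for l
  have InnerT: "Inner R T \<subseteq> T" and LeavesT: "Leaves R T \<subseteq> T" by (auto simp: Inner_def Leaves_def)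
  have finA: "finite A"
  proof -
    have "A \<subseteq> TR R N" using InnerT T_trains[OF ex] by (auto simp: A_def TR_def)
    thus ?thesis using finite_TR[OF rs] finite_subset by blast
  qed
  have finL: "finite L"
  proof -
    have "L \<subseteq> (\<Union>i\<le>N. TR R i)" using LeavesT T_trains[OF ex] by (auto simp: L_def TR_def nN)
    thus ?thesis using finite_TR[OF rs] finite_subset by blast
  qed
  have finB: "finite (B l)" for l using finite_TR[OF rs] by (simp add: B_def)
  have split: "TR R N = A \<union> (\<Union>l\<in>L. B l)"
  proof
    show "TR R N \<subseteq> A \<union> (\<Union>l\<in>L. B l)"
    proof
      fix \<sigma> assume s: "\<sigma> \<in> TR R N"
      hence sne: "\<sigma> \<noteq> []" and sT: "\<sigma> \<in> trains R" and sl: "train_len \<sigma> = N"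
        using nN by (auto simp: TR_def)
      from cover[OF ex sT sne] show "\<sigma> \<in> A \<union> (\<Union>l\<in>L. B l)"
      proof
        assume inT: "\<sigma> \<in> T"
        show ?thesis
        proof (cases "\<exists>k\<in>R. \<sigma> @ [k] \<in> T")
          case True thus ?thesis using inT sne sl by (auto simp: A_def Inner_def)
        next
          case False
          hence "\<sigma> \<in> L" using inT sne sl nN by (auto simp: L_def Leaves_def)
          moreover have "\<sigma> \<in> B \<sigma>" unfolding B_def TR_def using sl
            by (auto intro!: image_eqI[where x="[]"])
          ultimately show ?thesis by blast
        qed
      next
        assume "\<exists>l \<rho>. l \<in> Leaves R T \<and> l \<noteq> [] \<and> \<sigma> = l @ \<rho>"
        then obtain l \<rho> where l: "l \<in> Leaves R T" "l \<noteq> []" "\<sigma> = l @ \<rho>" by blast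
        have "l \<in> L" using l sl nN by (auto simp: L_def)
        moreover have "\<sigma> \<in> B l" unfolding B_def TR_def using l sl sT
          by (auto intro!: image_eqI[where x="\<rho>"])
        ultimately show ?thesis by blast
      qed
    qed
  next
    show "A \<union> (\<Union>l\<in>L. B l) \<subseteq> TR R N"
    proof -
      have "A \<subseteq> TR R N" using InnerT T_trains[OF ex] by (auto simp: A_def TR_def)
      moreover have "B l \<subseteq> TR R N" if "l \<in> L" for l
      proof -
        have "l \<in> trains R" "train_len l \<le> N" using that LeavesT T_trains[OF ex] nN
          by (auto simp: L_def)
        thus ?thesis by (auto simp: B_def TR_def)
      qed
      ultimately show ?thesis by blast
    qed
  qed
  have disjAB: "A \<inter> (\<Union>l\<in>L. B l) = {}"
  proof -
    have False if h: "\<sigma> \<in> A" "l \<in> L" "\<sigma> \<in> B l" for \<sigma> l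
    proof -
      obtain \<rho> where r: "\<sigma> = l @ \<rho>" using h(3) by (auto simp: B_def)
      have lL: "l \<in> Leaves R T" using that(2) by (simp add: L_def)
      have "l @ \<rho> \<in> T" using that(1) r InnerT by (auto simp: A_def)
      hence "\<rho> = []" using leaf_ext[OF ex lL] by blast
      hence "l \<in> Inner R T" using that(1) r by (simp add: A_def)
      thus False using lL by (auto simp: Inner_def Leaves_def)
    qed
    thus ?thesis by blast
  qed
  have disjB: "B l1 \<inter> B l2 = {}" if "l1 \<in> L" "l2 \<in> L" "l1 \<noteq> l2" for l1 l2
  proof -
    have False if hh: "l1 @ \<rho>1 = l2 @ \<rho>2" "l1 \<in> L" "l2 \<in> L" "l1 \<noteq> l2" for l1 l2 \<rho>1 \<rho>2
    proof -
      have L1: "l1 \<in> Leaves R T" "l1 \<in> T" and L2: "l2 \<in> Leaves R T" "l2 \<in> T"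
        using that LeavesT by (auto simp: L_def)
      obtain us where "l1 = l2 @ us \<or> l1 @ us = l2"
        using hh(1) append_eq_append_conv2 by metis
      thus False
      proof
        assume "l1 = l2 @ us"
        with leaf_ext[OF ex L2(1)] L1(2) have "us = []" by blast
        thus False using \<open>l1 = l2 @ us\<close> that(4) by simp
      next
        assume "l1 @ us = l2"
        with leaf_ext[OF ex L1(1)] L2(2) have "us = []" by blast
        thus False using \<open>l1 @ us = l2\<close> that(4) by simp
      qed
    qed
    thus ?thesis using that unfolding B_def by blast
  qed
  have sumB: "(\<Sum>\<sigma>\<in>B l. train_sign \<sigma>) = train_sign l * Fcount (int (N - train_len l)) R" for l
  proof -
    have "(\<Sum>\<sigma>\<in>B l. train_sign \<sigma>) = (\<Sum>\<rho>\<in>TR R (N - train_len l). train_sign (l @ \<rho>))"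
      unfolding B_def by (subst sum.reindex) (auto simp: inj_on_def)
    also have "\<dots> = train_sign l * (\<Sum>\<rho>\<in>TR R (N - train_len l). train_sign \<rho>)"
      by (simp add: sum_distrib_left)
    finally show ?thesis using Fcount_TR[OF rs] by simp
  qed
  have F: "Fcount n R = (\<Sum>\<sigma>\<in>A. train_sign \<sigma>) + (\<Sum>l\<in>L. train_sign l * Fcount (int (N - train_len l)) R)"
  proof -
    have "Fcount n R = (\<Sum>\<sigma>\<in>TR R N. train_sign \<sigma>)" using Fcount_TR[OF rs] nN by simp
    also have "\<dots> = (\<Sum>\<sigma>\<in>A. train_sign \<sigma>) + (\<Sum>\<sigma>\<in>(\<Union>l\<in>L. B l). train_sign \<sigma>)"
      unfolding split by (rule sum.union_disjoint) (use finA finL finB disjAB in auto)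
    also have "(\<Sum>\<sigma>\<in>(\<Union>l\<in>L. B l). train_sign \<sigma>) = (\<Sum>l\<in>L. \<Sum>\<sigma>\<in>B l. train_sign \<sigma>)"
      by (rule sum.UNION_disjoint) (use finL finB disjB in auto)
    finally show ?thesis using sumB by simp
  qed
  have D: "(\<Sum>k\<in>{k\<in>rods_of (Leaves R T). int (rlen k) \<le> n}. rsgn k * Fcount (n - int (rlen k)) R)
      = (\<Sum>l\<in>L. train_sign l * Fcount (int (N - train_len l)) R)"
  proof -
    have "{k\<in>rods_of (Leaves R T). int (rlen k) \<le> n} = hr ` L"
      using rods_of_filter[of "Leaves R T" "\<lambda>x. int x \<le> n"] by (simp add: L_def)
    hence "(\<Sum>k\<in>{k\<in>rods_of (Leaves R T). int (rlen k) \<le> n}. rsgn k * Fcount (n - int (rlen k)) R)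
       = (\<Sum>l\<in>L. rsgn (hr l) * Fcount (n - int (rlen (hr l))) R)"
      by (simp add: sum.reindex[OF inj_hr])
    also have "\<dots> = (\<Sum>l\<in>L. train_sign l * Fcount (int (N - train_len l)) R)"
      by (rule sum.cong) (auto simp: hr_def rsgn_def rlen_def L_def nN of_nat_diff)
    finally show ?thesis .
  qed
  have C: "Ccount N (rods_of (Inner R T)) = (\<Sum>\<sigma>\<in>A. train_sign \<sigma>)"
  proof -
    have Y: "{k\<in>rods_of (Inner R T). rlen k = N} = hr ` A"
      using rods_of_filter[of "Inner R T" "\<lambda>x. x = N"] by (simp add: A_def)
    have "Ccount N (rods_of (Inner R T)) = (\<Sum>k\<in>hr ` A. rsgn k)"
    proof (rule Ccount_sum)
      show "finite (hr ` A)" using finA by simp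
      show "hr ` A = {k\<in>rods_of (Inner R T). rlen k = N}" using Y by simp
      show "\<forall>k\<in>hr ` A. rsgn k = 1 \<or> rsgn k = -1"
        using sign_pm[OF rs] InnerT T_trains[OF ex] by (auto simp: A_def hr_def rsgn_def)
    qed
    also have "\<dots> = (\<Sum>\<sigma>\<in>A. rsgn (hr \<sigma>))"
      using sum.reindex[OF inj_hr, of rsgn A] by (simp add: comp_def)
    also have "\<dots> = (\<Sum>\<sigma>\<in>A. train_sign \<sigma>)"
      by (rule sum.cong) (simp_all add: hr_def rsgn_def)
    finally show ?thesis .
  qed
  show ?thesis unfolding Disc_def using F D C by (simp add: N_def)
qed

end
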